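(* For every integer $m\ge0$, the space of $L_1$-invariants in $S^m(Q^\times/Q)$ is $\mathbb{C}q_1^m$; that is, $H^0(L_1;S^*(Q^\times/Q))=\mathbb{C}[q_1]$ is the polynomial algebra in $q_1$.
   Context: $Q^\times$ is the Fréchet space of holomorphic quadratic differentials $f(z)dz^2$ on $\mathbb{C}\setminus\{0\}$ and $Q\subset Q^\times$ the closed subspace of those with $f$ entire; the Lie algebra of holomorphic vector fields on $\mathbb{C}$ vanishing at $0$ acts on both by $(\xi\frac{d}{dz})\cdot(fdz^2)=(\xi f'+2\xi'f)dz^2$, hence on the quotient $Q^\times/Q$. $L_1$ is the closed subalgebra generated by $e_k=z^{k+1}\frac{d}{dz}$, $k\ge1$ (holomorphic vector fields on $\mathbb{C}$ vanishing to order at least $2$ at $0$). For $\nu\in\mathbb{Z}$, $q_\nu$ denotes the class of $z^{\nu-2}dz^2$ in $Q^\times/Q$, so $q_1$ is the class of $z^{-1}dz^2$. $S^m(Q^\times/Q)$ is the completed $m$-fold symmetric tensor power over $\mathbb{C}$ with the diagonal action, $S^*=\bigoplus_{m\ge0}S^m$ with the symmetric product, and $H^0(L_1;\cdot)$ denotes $L_1$-invariants. *)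

theory Defs
  imports "HOL-Analysis.Analysis"
begin

(* Coefficient model.
   - A holomorphic vector field xi(z) d/dz on C is given by its Taylor coefficients b,
     xi(z) = sum_j b j * z^j, entire  <=>  sum_j |b j| R^j < oo for all R > 0.
   - An element of Q^x/Q (Laurent series on C\{0} modulo entire ones) is given by its
     principal part  sum_{n>=1} p n * z^(-n) dz^2  (p 0 = 0); the class is holomorphic on
     C\{0} iff w |-> sum_n p n w^n is entire.
   - An element of the completed m-fold symmetric power is a symmetric coefficient array
     A :: nat list => complex, A [n1,...,nm] being the coefficient of
     z^(-n1) dz^2 (x) ... (x) z^(-nm) dz^2 (n_i >= 1), with
     sum |A ns| R^(n1+...+nm) < oo for all R (i.e. an entire function on C^m). *)

definition entire_coeffs :: "(nat \<Rightarrow> complex) \<Rightarrow> bool" where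
  "entire_coeffs b \<longleftrightarrow> (\<forall>R>0. summable (\<lambda>j. norm (b j) * R ^ j))"

text \<open>L_1: holomorphic vector fields on C vanishing to order at least 2 at 0.\<close>
definition L1 :: "(nat \<Rightarrow> complex) set" where
  "L1 = {b. entire_coeffs b \<and> b 0 = 0 \<and> b 1 = 0}"

definition Sm :: "nat \<Rightarrow> (nat list \<Rightarrow> complex) set" where
  "Sm m = {A. (\<forall>ns. A ns \<noteq> 0 \<longrightarrow> length ns = m \<and> (\<forall>n\<in>set ns. 1 \<le> n))
            \<and> (\<forall>ns ms. mset ns = mset ms \<longrightarrow> A ns = A ms)
            \<and> (\<forall>R>0. (\<lambda>ns. norm (A ns) * R ^ sum_list ns) summable_on UNIV)}"

text \<open>Action of xi = sum_j b j z^j d/dz on the class of z^(-n) dz^2: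
  xi f' + 2 xi' f with f = z^(-n) gives sum_j b j (2j - n) z^(j-1-n) dz^2; terms with
  j-1-n >= 0 lie in Q and vanish in the quotient. Diagonal (derivation) action on
  tensors: sum over the factors. Written for the output coefficient at ns: the
  coefficient of z^(-n') receives b j (j+1-n') times the input coefficient at
  n' + j - 1; only j >= 2 matters for xi in L1 (we sum over j = i+2).\<close>
definition L1_act :: "(nat \<Rightarrow> complex) \<Rightarrow> (nat list \<Rightarrow> complex) \<Rightarrow> (nat list \<Rightarrow> complex)" where
  "L1_act b A ns =
     (if (\<forall>n\<in>set ns. 1 \<le> n) then
        (\<Sum>i<length ns. \<Sum>j. b (j + 2) * (of_nat (j + 3) - of_nat (ns ! i))
                               * A (ns[i := ns ! i + j + 1]))
      else 0)"

text \<open>q_nu = class of z^(nu-2) dz^2 in Q^x/Q (zero if nu >= 2).\<close>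
definition qcls :: "int \<Rightarrow> (nat \<Rightarrow> complex)" where
  "qcls \<nu> = (\<lambda>n. if 1 \<le> n \<and> int n = 2 - \<nu> then 1 else 0)"

definition sympow :: "nat \<Rightarrow> (nat \<Rightarrow> complex) \<Rightarrow> (nat list \<Rightarrow> complex)" where
  "sympow m p = (\<lambda>ns. if length ns = m then prod_list (map p ns) else 0)"

end

theory Submission
  imports Defs
begin

lemma q1: "qcls 1 n = (if n = 1 then 1 else 0)"
  unfolding qcls_def by auto

lemma prod_q1: "prod_list (map (qcls 1) ns) = (if (\<forall>n\<in>set ns. n = 1) then 1 else 0)"
  by (induction ns) (simp_all add: q1)

lemma sympow_q1:
  "sympow m (qcls 1) ns = (if ns = replicate m 1 then 1 else 0)"
proof -
  have r: "(length ns = m \<and> (\<forall>n\<in>set ns. n = 1)) \<longleftrightarrow> ns = replicate m 1"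
  proof
    assume "length ns = m \<and> (\<forall>n\<in>set ns. n = 1)"
    then show "ns = replicate m 1" by (intro replicate_eqI) auto
  next
    assume "ns = replicate m 1"
    then show "length ns = m \<and> (\<forall>n\<in>set ns. n = 1)" by simp
  qed
  show ?thesis
  proof (cases "ns = replicate m 1")
    case True
    have "prod_list (map (qcls 1) (replicate m 1)) = 1" by (simp only: prod_q1) simp
    then show ?thesis unfolding sympow_def True by simp
  next
    case False
    then have nr: "\<not> (length ns = m \<and> (\<forall>n\<in>set ns. n = 1))" using r by blast
    show ?thesis
    proof (cases "length ns = m")
      case True
      then have "\<not> (\<forall>n\<in>set ns. n = 1)" using nr by blast
      then have "prod_list (map (qcls 1) ns) = 0" by (simp only: prod_q1 if_False)
      then show ?thesis unfolding sympow_def using False True by simp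
    next
      case F2: False
      then show ?thesis unfolding sympow_def using False by simp
    qed
  qed
qed

lemma delta_in_Sm: "(\<lambda>ns. c * sympow m (qcls 1) ns) \<in> Sm m"
proof -
  have key: "(ns = replicate m (1::nat)) = (mset ns = mset (replicate m 1))" for ns
  proof
    assume h: "mset ns = mset (replicate m 1)"
    have "length ns = m" using mset_eq_length[OF h] by simp
    moreover have "set ns = set (replicate m 1)" using arg_cong[OF h, of set_mset] by simp
    ultimately show "ns = replicate m 1" by (intro replicate_eqI) auto
  qed simp
  have c1: "\<forall>ns. c * sympow m (qcls 1) ns \<noteq> 0 \<longrightarrow> length ns = m \<and> (\<forall>n\<in>set ns. 1 \<le> n)"
  proof (intro allI impI)
    fix ns assume "c * sympow m (qcls 1) ns \<noteq> 0"
    then have "ns = replicate m 1" by (simp add: sympow_q1 split: if_splits)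
    then show "length ns = m \<and> (\<forall>n\<in>set ns. 1 \<le> n)" by simp
  qed
  have c2: "\<forall>ns ms. mset ns = mset ms \<longrightarrow> c * sympow m (qcls 1) ns = c * sympow m (qcls 1) ms"
  proof (intro allI impI)
    fix ns ms :: "nat list" assume "mset ns = mset ms"
    then have "(ns = replicate m 1) = (ms = replicate m 1)" unfolding key[of ns] key[of ms] by simp
    then show "c * sympow m (qcls 1) ns = c * sympow m (qcls 1) ms" by (simp only: sympow_q1)
  qed
  have c3: "(\<lambda>ns. norm (c * sympow m (qcls 1) ns) * R ^ sum_list ns) summable_on UNIV" for R :: real
  proof -
    let ?f = "\<lambda>ns. norm (c * sympow m (qcls 1) ns) * R ^ sum_list ns"
    have a: "?f summable_on {replicate m 1}" by (rule summable_on_finite) simp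
    have z: "?f x = 0" if "x \<in> UNIV - {replicate m 1}" for x
      using that by (simp add: sympow_q1)
    have "?f summable_on UNIV \<longleftrightarrow> ?f summable_on {replicate m 1}"
      by (rule summable_on_cong_neutral) (use z in auto)
    then show ?thesis using a by simp
  qed
  show ?thesis unfolding Sm_def mem_Collect_eq using c1 c2 c3 by blast
qed

lemma delta_inv: "L1_act b (\<lambda>ns. c * sympow m (qcls 1) ns) = (\<lambda>_. 0)"
proof
  fix ns :: "nat list"
  show "L1_act b (\<lambda>ns. c * sympow m (qcls 1) ns) ns = 0"
  proof (cases "\<forall>n\<in>set ns. 1 \<le> n")
    case True
    have "sympow m (qcls 1) (ns[i := ns ! i + j + 1]) = 0" if "i < length ns" for i j
    proof -
      have "ns ! i + j + 1 \<in> set (ns[i := ns ! i + j + 1])" using that by (simp add: set_update_memI)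
      moreover have "ns ! i + j + 1 \<noteq> 1" using True that nth_mem by fastforce
      ultimately show ?thesis by (auto simp: sympow_q1)
    qed
    then show ?thesis using True unfolding L1_act_def by simp
  qed (auto simp: L1_act_def)
qed

lemma single_in_L1:
  assumes "1 \<le> s"
  shows "(\<lambda>t. if t = s + 1 then 1 else 0 :: complex) \<in> L1"
proof -
  have "summable (\<lambda>j. norm (if j = s + 1 then 1 else 0 :: complex) * R ^ j)" for R :: real
  proof -
    have "(\<lambda>j. norm (if j = s + 1 then 1 else 0 :: complex) * R ^ j)
          = (\<lambda>j. if j = s + 1 then R ^ j else 0)" by auto
    then show ?thesis by simp
  qed
  then show ?thesis using assms unfolding L1_def entire_coeffs_def by auto
qed

lemma act_single:
  assumes "1 \<le> s" "\<forall>n\<in>set ns. 1 \<le> n"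
  shows "L1_act (\<lambda>t. if t = s + 1 then 1 else 0) A ns
       = (\<Sum>i<length ns. (of_nat (s + 2) - of_nat (ns ! i)) * A (ns[i := ns ! i + s]))"
proof -
  have "(\<Sum>j. (if j + 2 = s + 1 then 1 else 0) * (of_nat (j + 3) - of_nat (ns ! i))
                 * A (ns[i := ns ! i + j + 1]))
        = (of_nat (s + 2) - of_nat (ns ! i)) * A (ns[i := ns ! i + s])" for i
  proof -
    have e: "(\<lambda>j. (if j + 2 = s + 1 then 1 else 0) * (of_nat (j + 3) - of_nat (ns ! i))
                 * A (ns[i := ns ! i + j + 1]))
          = (\<lambda>j. if j = s - 1 then (of_nat (j + 3) - of_nat (ns ! i))
                 * A (ns[i := ns ! i + j + 1]) else (0::complex))"
      using assms(1) by (auto simp: fun_eq_iff)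
    have h: "s - 1 + 3 = s + 2" "ns ! i + (s - 1) + 1 = ns ! i + s" using assms(1) by auto
    have "(\<lambda>j. if j = s - 1 then (of_nat (j + 3) - of_nat (ns ! i))
                 * A (ns[i := ns ! i + j + 1]) else (0::complex)) sums
          ((of_nat (s - 1 + 3) - of_nat (ns ! i)) * A (ns[i := ns ! i + (s - 1) + 1]))"
      by (rule sums_single)
    then have "(\<Sum>j. if j = s - 1 then (of_nat (j + 3) - of_nat (ns ! i))
                 * A (ns[i := ns ! i + j + 1]) else (0::complex))
          = (of_nat (s - 1 + 3) - of_nat (ns ! i)) * A (ns[i := ns ! i + (s - 1) + 1])"
      by (rule sums_unique[symmetric])
    then show ?thesis unfolding e h .
  qed
  then show ?thesis using assms(2) unfolding L1_act_def by simp
qed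

lemma sum_list_upd:
  "k < length xs \<Longrightarrow> sum_list (xs[k := x]) + xs ! k = sum_list xs + (x::nat)"
  by (induction xs arbitrary: k) (auto split: nat.split)

lemma main_zero:
  assumes sym: "\<forall>ns ms. mset ns = mset ms \<longrightarrow> A ns = A ms"
    and inv: "\<forall>b\<in>L1. L1_act b A = (\<lambda>_. 0)"
  shows "\<And>ns i. length ns = m \<Longrightarrow> \<forall>n\<in>set ns. 1 \<le> n \<Longrightarrow> i < m \<Longrightarrow> 2 \<le> ns ! i
        \<Longrightarrow> \<forall>j<m. ns ! j \<le> ns ! i \<Longrightarrow> sum_list ns - ns ! i = d \<Longrightarrow> A ns = 0"
proof (induction d rule: less_induct)
  case (less d ns i)
  define s where "s = ns ! i - 1"
  define ns' where "ns' = ns[i := 1]"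
  have s1: "1 \<le> s" using less.prems by (simp add: s_def)
  have len': "length ns' = m" using less.prems by (simp add: ns'_def)
  have pos': "\<forall>n\<in>set ns'. 1 \<le> n" using less.prems unfolding ns'_def
    by (metis in_set_conv_nth le_refl length_list_update nth_list_update)
  have ns'j: "j < m \<Longrightarrow> ns' ! j = (if j = i then 1 else ns ! j)" for j
    using less.prems by (simp add: ns'_def)
  have trm: "(of_nat (s + 2) - of_nat (ns' ! j)) * A (ns'[j := ns' ! j + s])
        = (if ns' ! j = 1 then of_nat (s + 1) * A ns else 0)" if j: "j < m" for j
  proof (cases "j = i")
    case True
    have "ns'[j := ns' ! j + s] = ns" using True less.prems s1
      by (simp add: ns'_def s_def)
    then show ?thesis using True ns'j j by simp
  next
    case False
    show ?thesis
    proof (cases "ns ! j = 1")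
      case True
      have "ns'[j := ns' ! j + s] = ns[i := ns ! j, j := ns ! i]"
        using True False j less.prems s1 by (simp add: ns'_def s_def ns'j)
      also have "\<dots> = ns[j := ns ! i, i := ns ! j]" using False by (simp add: list_update_swap)
      finally have "mset (ns'[j := ns' ! j + s]) = mset ns"
        using mset_swap[of i ns j] less.prems j by simp
      then have "A (ns'[j := ns' ! j + s]) = A ns" using sym by blast
      then show ?thesis using True False ns'j j by simp
    next
      case F2: False
      have nj: "2 \<le> ns ! j" using F2 less.prems j by (metis nth_mem le_antisym not_less_eq_eq one_add_one plus_1_eq_Suc)
      define ns2 where "ns2 = ns'[j := ns ! j + s]"
      have e2: "ns'[j := ns' ! j + s] = ns2" using ns'j[OF j] False by (simp add: ns2_def)
      have len2: "length ns2 = m" using len' by (simp add: ns2_def)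
      have pos2: "\<forall>n\<in>set ns2. 1 \<le> n"
      proof
        fix n assume "n \<in> set ns2"
        then have "n \<in> insert (ns ! j + s) (set ns')" unfolding ns2_def using set_update_subset_insert by fast
        then show "1 \<le> n" using pos' s1 by auto
      qed
      have at2: "ns2 ! j = ns ! j + s" using j len' by (simp add: ns2_def)
      have max2: "\<forall>k<m. ns2 ! k \<le> ns2 ! j"
      proof (intro allI impI)
        fix k assume k: "k < m"
        show "ns2 ! k \<le> ns2 ! j"
        proof (cases "k = j")
          case False
          then have "ns2 ! k = ns' ! k" by (simp add: ns2_def)
          also have "\<dots> \<le> ns ! i" using ns'j[OF k] less.prems k by auto
          finally show ?thesis using at2 s_def nj by simp
        qed simp
      qed
      have su1: "sum_list ns' + ns ! i = sum_list ns + 1"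
        using sum_list_upd[of i ns 1] less.prems by (simp add: ns'_def)
      have su2: "sum_list ns2 + ns ! j = sum_list ns' + (ns ! j + s)"
        using sum_list_upd[of j ns' "ns ! j + s"] len' j ns'j[OF j] False by (simp add: ns2_def)
      have le2: "ns2 ! j \<le> sum_list ns2" using len2 j by (simp add: elem_le_sum_list)
      have "sum_list ns2 - ns2 ! j < d"
        using su1 su2 le2 at2 nj less.prems(6) s_def less.prems(4) by linarith
      then have "A ns2 = 0"
        using less.IH[OF _ len2 pos2 j _ max2 refl] at2 nj by simp
      then show ?thesis using e2 ns'j[OF j] F2 False by simp
    qed
  qed
  have "L1_act (\<lambda>t. if t = s + 1 then 1 else 0) A ns' = 0"
    using inv single_in_L1[OF s1] by metis
  then have "(\<Sum>j<m. (of_nat (s + 2) - of_nat (ns' ! j)) * A (ns'[j := ns' ! j + s])) = 0"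
    using act_single[OF s1 pos'] len' by simp
  then have "(\<Sum>j<m. (if ns' ! j = 1 then of_nat (s + 1) * A ns else 0)) = 0"
    using trm by simp
  then have "(\<Sum>j\<in>{j\<in>{..<m}. ns' ! j = 1}. of_nat (s + 1) * A ns) = 0"
    by (subst sum.inter_filter) simp_all
  then have "of_nat (card {j\<in>{..<m}. ns' ! j = 1}) * (of_nat (s + 1) * A ns) = 0"
    by simp
  moreover have "card {j\<in>{..<m}. ns' ! j = 1} \<noteq> 0"
  proof -
    have "i \<in> {j\<in>{..<m}. ns' ! j = 1}" using ns'j less.prems by simp
    moreover have "finite {j\<in>{..<m}. ns' ! j = 1}" by simp
    ultimately show ?thesis using card_0_eq by blast
  qed
  then have c1: "of_nat (card {j\<in>{..<m}. ns' ! j = 1}) \<noteq> (0::complex)" by (simp only: of_nat_eq_0_iff) simp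
  have c2: "of_nat (s + 1) \<noteq> (0::complex)" by (simp only: of_nat_eq_0_iff)
  ultimately show ?case using c1 c2 by (simp only: mult_eq_0_iff) simp
qed


theorem lemma4p8:
  fixes m :: nat
  shows "{A \<in> Sm m. \<forall>b\<in>L1. L1_act b A = (\<lambda>_. 0)}
         = {(\<lambda>ns. c * sympow m (qcls 1) ns) | c :: complex. True}"
proof (rule set_eqI, rule iffI)
  fix A assume "A \<in> {(\<lambda>ns. c * sympow m (qcls 1) ns) | c :: complex. True}"
  then obtain c where c: "A = (\<lambda>ns. c * sympow m (qcls 1) ns)"
    unfolding mem_Collect_eq by (elim exE conjE)
  have "A \<in> Sm m" unfolding c by (rule delta_in_Sm)
  moreover have "\<forall>b\<in>L1. L1_act b A = (\<lambda>_. 0)" unfolding c using delta_inv by simp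
  ultimately show "A \<in> {A \<in> Sm m. \<forall>b\<in>L1. L1_act b A = (\<lambda>_. 0)}" by simp
next
  fix A assume "A \<in> {A \<in> Sm m. \<forall>b\<in>L1. L1_act b A = (\<lambda>_. 0)}"
  then have A: "A \<in> Sm m" and inv: "\<forall>b\<in>L1. L1_act b A = (\<lambda>_. 0)" by simp_all
  have supp: "\<forall>ns. A ns \<noteq> 0 \<longrightarrow> length ns = m \<and> (\<forall>n\<in>set ns. 1 \<le> n)"
    using A unfolding Sm_def mem_Collect_eq by (elim conjE)
  have sym: "\<forall>ns ms. mset ns = mset ms \<longrightarrow> A ns = A ms"
    using A unfolding Sm_def mem_Collect_eq by (elim conjE)
  have val: "A ns = A (replicate m 1) * sympow m (qcls 1) ns" for ns
  proof (cases "ns = replicate m 1")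
    case True then show ?thesis by (simp add: sympow_q1)
  next
    case False
    show ?thesis
    proof (rule ccontr)
      assume "A ns \<noteq> A (replicate m 1) * sympow m (qcls 1) ns"
      then have nz: "A ns \<noteq> 0" using False by (simp add: sympow_q1)
      then have len: "length ns = m" and pos: "\<forall>n\<in>set ns. 1 \<le> n" using supp by auto
      have "\<not> (\<forall>n\<in>set ns. n = 1)"
      proof
        assume "\<forall>n\<in>set ns. n = 1"
        then have "ns = replicate m 1" using len by (intro replicate_eqI) auto
        then show False using False by simp
      qed
      then obtain n where n: "n \<in> set ns" "n \<noteq> 1" by auto
      then obtain k where k: "k < m" "ns ! k = n" using len by (auto simp: in_set_conv_nth)
      have "1 \<le> n" using pos n by simp
      then have k2: "2 \<le> ns ! k" using n k by simp
      have "ns \<noteq> []" using k len by auto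
      then have "Max (set ns) \<in> set ns" by simp
      then obtain i where i: "i < m" "ns ! i = Max (set ns)" using len by (auto simp: in_set_conv_nth)
      have mx: "\<forall>j<m. ns ! j \<le> ns ! i"
      proof (intro allI impI)
        fix j assume "j < m"
        then have "ns ! j \<in> set ns" using len by simp
        then show "ns ! j \<le> ns ! i" using i by simp
      qed
      have "2 \<le> ns ! i" using mx k k2 by (meson le_trans)
      then have "A ns = 0" using main_zero[OF sym inv len pos i(1) _ mx refl] by simp
      then show False using nz by simp
    qed
  qed
  have "A = (\<lambda>ns. A (replicate m 1) * sympow m (qcls 1) ns)" using val by (rule ext)
  then show "A \<in> {(\<lambda>ns. c * sympow m (qcls 1) ns) | c :: complex. True}"
    unfolding mem_Collect_eq by (intro exI conjI TrueI)
qed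

end
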